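(* Fix a pair of linear projections $\pi_1,\pi_2:\mathbb P^3\dashrightarrow\mathbb P^2$ with non-coincident centers $c_1,c_2$, and let $F$ be its fundamental matrix. There is a $1:1$ correspondence between the quadric surfaces $Q\subset\mathbb P^3$ passing through $c_1,c_2$ and the lines $\ell\subset\mathbb P(\mathbb C^{3\times3})$ passing through $F$.
   Context: Work over $\mathbb C$. A linear projection $\pi:\mathbb P^3\dashrightarrow\mathbb P^2$ is $p\mapsto Ap$ with $A\in\mathbb C^{3\times4}$ of rank three; its center spans $\ker A$. The fundamental matrix of $(\pi_1,\pi_2)$ is the (unique up to scale) rank-two matrix $F\in\mathbb P(\mathbb C^{3\times3})$ with $\pi_2(p)^\top F\pi_1(p)=0$ for all $p\in\mathbb P^3$. *)

theory Defs
  imports "HOL-Analysis.Analysis"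
begin

definition bdot :: "complex^'n \<Rightarrow> complex^'n \<Rightarrow> complex" where
  "bdot x y = (\<Sum>i\<in>UNIV. x$i * y$i)"

definition qf :: "complex^4^4 \<Rightarrow> complex^4 \<Rightarrow> complex" where
  "qf S x = bdot x (S *v x)"

text \<open>The projective line in P(C^{3x3}) through [F] and [M], as the 2-dim
  complex linear span of F and M.\<close>
definition pline :: "complex^3^3 \<Rightarrow> complex^3^3 \<Rightarrow> (complex^3^3) set" where
  "pline F M = {mat a ** F + mat b ** M | a b. True}"

definition lines_through :: "complex^3^3 \<Rightarrow> (complex^3^3) set set" where
  "lines_through F = {pline F M | M. \<forall>t. M \<noteq> mat t ** F}"

text \<open>A quadric surface in P^3, i.e. a point of P(Sym^2 C^4), represented by
  the complex line spanned by a symmetric 4x4 matrix.\<close>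
definition qpoint :: "complex^4^4 \<Rightarrow> (complex^4^4) set" where
  "qpoint S = {mat b ** S | b. True}"

definition quadrics_through :: "complex^4 \<Rightarrow> complex^4 \<Rightarrow> (complex^4^4) set set" where
  "quadrics_through c1 c2 =
     {qpoint S | S. S \<noteq> 0 \<and> transpose S = S \<and> qf S c1 = 0 \<and> qf S c2 = 0}"

end

theory Submission
  imports Defs
begin


lemma bdot_comm: "bdot x y = bdot y x"
  by (simp add: bdot_def mult.commute)
lemma bdot_add_left[simp]: "bdot (x + y) z = bdot x z + bdot y z"
  by (simp add: bdot_def distrib_right sum.distrib)
lemma bdot_add_right[simp]: "bdot z (x + y) = bdot z x + bdot z y"
  by (simp add: bdot_def distrib_left sum.distrib)
lemma bdot_diff_left[simp]: "bdot (x - y) z = bdot x z - bdot y z"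
  by (simp add: bdot_def left_diff_distrib sum_subtractf)
lemma bdot_diff_right[simp]: "bdot z (x - y) = bdot z x - bdot z y"
  by (simp add: bdot_def right_diff_distrib sum_subtractf)
lemma bdot_scale_left[simp]: "bdot (c *s x) z = c * bdot x z"
  by (simp add: bdot_def sum_distrib_left mult.assoc)
lemma bdot_scale_right[simp]: "bdot z (c *s x) = c * bdot z x"
  by (simp add: bdot_def sum_distrib_left mult.left_commute)
lemma bdot_zero_left[simp]: "bdot 0 z = 0" by (simp add: bdot_def)
lemma bdot_zero_right[simp]: "bdot z 0 = 0" by (simp add: bdot_def)
lemma bdot_uminus_left[simp]: "bdot (- x) z = - bdot x z" by (simp add: bdot_def sum_negf)
lemma bdot_uminus_right[simp]: "bdot z (- x) = - bdot z x" by (simp add: bdot_def sum_negf)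
lemma bdot_axis_left[simp]: "bdot (axis i 1) v = v $ i"
  by (simp add: bdot_def axis_def if_distrib if_distribR cong: if_cong)
lemma bdot_axis_right[simp]: "bdot v (axis i 1) = v $ i"
  by (simp add: bdot_def axis_def if_distrib if_distribR cong: if_cong)
lemma bdot_mat: "bdot x (A *v y) = bdot (transpose A *v x) y"
  apply (simp add: bdot_def matrix_vector_mult_def transpose_def vector_matrix_mult_def sum_distrib_left sum_distrib_right)
  apply (subst sum.swap) apply (simp add: mult_ac)
  done
lemma mv_scale: "(A::complex^'n^'m) *v (c *s x) = c *s (A *v x)"
  by (simp add: matrix_vector_mult_def vec_eq_iff sum_distrib_left mult.left_commute)
lemma mv_uminus: "(A::complex^'n^'m) *v (- x) = - (A *v x)"
  by (simp add: matrix_vector_mult_def vec_eq_iff sum_negf)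
lemma mat_mult_nth[simp]: "(mat a ** (X::complex^'n^'m)) $ i $ j = a * X $ i $ j"
proof -
  have "(\<Sum>k\<in>UNIV. (if i = k then a else 0) * X $ k $ j) = (\<Sum>k\<in>UNIV. if i = k then a * X$i$j else 0)"
    by (rule sum.cong) auto
  then show ?thesis unfolding matrix_matrix_mult_def mat_def by simp
qed
lemma mult_mat_nth[simp]: "((X::complex^'n^'m) ** mat a) $ i $ j = X $ i $ j * a"
  unfolding matrix_matrix_mult_def mat_def by (simp add: if_distrib sum.delta' cong: if_cong)
lemma mat_comm: "(X::complex^'n^'m) ** mat a = mat a ** X"
  by (simp add: vec_eq_iff mult.commute)
lemma mat_mult_mat: "mat a ** mat b = (mat (a*b) :: complex^'n^'n)"
  by (simp add: vec_eq_iff) (simp add: mat_def)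
lemma mat_add: "mat a ** X + mat b ** X = mat (a+b) ** (X::complex^'n^'m)"
  by (simp add: vec_eq_iff distrib_right)
lemma mat_mv: "(mat a ** X) *v v = a *s ((X::complex^'n^'m) *v v)"
  by (simp add: vec_eq_iff matrix_vector_mult_def sum_distrib_left mult.assoc)
lemma mat_assoc_left: "(mat a ** X) ** Y = mat a ** ((X::complex^'n^'m) ** Y)"
  by (simp add: matrix_mul_assoc)
lemma mat_assoc_right: "X ** (mat a ** Y) = mat a ** ((X::complex^'n^'m) ** Y)"
  by (simp add: matrix_mul_assoc mat_comm)
lemma transpose_mat_mult: "transpose (mat a ** X) = mat a ** transpose (X::complex^'n^'m)"
  by (simp add: matrix_transpose_mul mat_comm)
lemma transpose_add: "transpose (X + Y) = transpose X + transpose (Y::complex^'n^'m)"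
  by (simp add: transpose_def vec_eq_iff)
lemma transpose_uminus: "transpose (- X) = - transpose (X::complex^'n^'m)"
  by (simp add: transpose_def vec_eq_iff)
lemma matrix_add_rdistrib': "((B + C) ** A) = (B ** A) + (C ** (A::complex^'n^'m))"
  by (vector matrix_matrix_mult_def sum.distrib[symmetric] field_simps)
lemma mat_zero_mult: "mat 0 ** X = (0::complex^'n^'m)" by simp

lemma matrix_ext_bdot:
  fixes A B :: "complex^'n^'m"
  assumes "\<And>x y. bdot x (A *v y) = bdot x (B *v y)"
  shows "A = B"
proof -
  have "A *v y = B *v y" for y
    using assms[of "axis i 1" y for i] by (simp add: vec_eq_iff)
  then show ?thesis by (simp add: matrix_eq)
qed
lemma sum_4: "sum f (UNIV::4 set) = f 1 + f 2 + f 3 + f 4"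
  unfolding UNIV_4 by (simp add: add.assoc)
lemma sum_3: "sum f (UNIV::3 set) = f 1 + f 2 + f 3"
  unfolding UNIV_3 by (simp add: add.assoc)
lemma span4:
  fixes a1 a2 a3 a4 :: "complex^4"
  assumes ind: "\<And>v1 v2 v3 v4. v1 *s a1 + v2 *s a2 + v3 *s a3 + v4 *s a4 = 0 \<Longrightarrow> v1 = 0 \<and> v2 = 0 \<and> v3 = 0 \<and> v4 = 0"
  shows "\<exists>v1 v2 v3 v4. u = v1 *s a1 + v2 *s a2 + v3 *s a3 + v4 *s a4"
proof -
  define G :: "complex^4^4" where "G = (\<chi> i j. if j = 1 then a1$i else if j = 2 then a2$i else if j = 3 then a3$i else a4$i)"
  have G: "G *v v = v$1 *s a1 + v$2 *s a2 + v$3 *s a3 + v$4 *s a4" for v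
    by (simp add: G_def vec_eq_iff matrix_vector_mult_def sum_4 mult.commute)
  have "\<forall>v. G *v v = 0 \<longrightarrow> v = 0"
  proof (intro allI impI)
    fix v assume "G *v v = 0"
    then have "v$1 = 0 \<and> v$2 = 0 \<and> v$3 = 0 \<and> v$4 = 0" using ind G by metis
    then show "v = 0" by (simp add: vec_eq_iff forall_4)
  qed
  then obtain B where "B ** G = mat 1" using matrix_left_invertible_ker by blast
  then have "G ** B = mat 1" using matrix_left_right_inverse by blast
  then have "u = G *v (B *v u)" by (simp add: matrix_vector_mul_assoc)
  then show ?thesis unfolding G by blast
qed

lemma right_inv:
  fixes A :: "complex^'n^'m"
  assumes "rank A = CARD('m)"
  shows "\<exists>B. A ** B = mat 1"
proof -
  have "\<forall>c. sum (\<lambda>i::'m. c i *s row i A) UNIV = 0 \<longrightarrow> (\<forall>i. c i = 0)"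
  proof (intro allI impI, rule ccontr)
    fix c j assume s: "sum (\<lambda>i::'m. c i *s row i A) UNIV = 0" and "c j \<noteq> 0"
    let ?W = "(\<lambda>i. row i A) ` (UNIV - {j})"
    have "sum (\<lambda>i::'m. c i *s row i A) UNIV = c j *s row j A + sum (\<lambda>i::'m. c i *s row i A) (UNIV - {j})"
      by (simp add: sum.remove)
    then have e: "c j *s row j A = - sum (\<lambda>i::'m. c i *s row i A) (UNIV - {j})"
      using s by (simp add: eq_neg_iff_add_eq_0)
    have r: "row j A = (1 / c j) *s (c j *s row j A)"
      using \<open>c j \<noteq> 0\<close> by (simp add: vec.scale_scale)
    have "sum (\<lambda>i::'m. c i *s row i A) (UNIV - {j}) \<in> vec.span ?W"
      by (intro vec.span_sum) (auto intro: vec.span_scale vec.span_base)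
    then have "c j *s row j A \<in> vec.span ?W" unfolding e by (rule vec.span_neg)
    then have "row j A \<in> vec.span ?W" using r by (metis vec.span_scale)
    then have "rows A \<subseteq> vec.span ?W"
      unfolding rows_def by (auto intro: vec.span_base)
    then have "vec.dim (rows A) \<le> card ?W" by (intro vec.dim_le_card) auto
    also have "\<dots> \<le> card (UNIV - {j})" by (rule card_image_le) auto
    also have "\<dots> < CARD('m)" by (simp add: card_Diff_singleton)
    finally show False using assms by (simp add: row_rank_def_gen)
  qed
  then show ?thesis using matrix_right_invertible_independent_rows by blast
qed
lemma axis3_indep:
  "x1 *s axis 1 1 + x2 *s axis 2 1 + x3 *s axis 3 1 = (0::complex^3) \<Longrightarrow> x1 = 0 \<and> x2 = 0 \<and> x3 = 0"
  by (simp add: vec_eq_iff forall_3 axis_def)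

lemma ker_line:
  fixes A :: "complex^4^3"
  assumes R: "A ** R = mat 1" and c: "c \<noteq> 0" "A *v c = 0" and y: "A *v y = 0"
  shows "\<exists>s. y = s *s c"
proof (cases "y = 0")
  case True then show ?thesis by (intro exI[of _ 0]) simp
next
  case False
  have AR: "A *v (R *v w) = w" for w using R by (simp add: matrix_vector_mul_assoc)
  let ?a1 = "R *v axis 1 1" and ?a2 = "R *v axis 2 1" and ?a3 = "R *v axis 3 1"
  have Ae: "A *v (v1 *s ?a1 + v2 *s ?a2 + v3 *s ?a3 + v4 *s y) = v1 *s axis 1 1 + v2 *s axis 2 1 + v3 *s axis 3 1" for v1 v2 v3 v4
    by (simp add: matrix_vector_right_distrib mv_scale AR y)
  have "\<exists>v1 v2 v3 v4. c = v1 *s ?a1 + v2 *s ?a2 + v3 *s ?a3 + v4 *s y"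
  proof (rule span4)
    fix v1 v2 v3 v4 assume h: "v1 *s ?a1 + v2 *s ?a2 + v3 *s ?a3 + v4 *s y = 0"
    then have "v1 *s axis 1 1 + v2 *s axis 2 1 + v3 *s axis 3 1 = (0::complex^3)"
      using Ae[of v1 v2 v3 v4] by simp
    then have 0: "v1 = 0" "v2 = 0" "v3 = 0" using axis3_indep by blast+
    then have "v4 *s y = 0" using h by simp
    then have "v4 = 0" using False by (simp add: vec.scale_eq_0_iff)
    then show "v1 = 0 \<and> v2 = 0 \<and> v3 = 0 \<and> v4 = 0" using 0 by simp
  qed
  then obtain v1 v2 v3 v4 where cv: "c = v1 *s ?a1 + v2 *s ?a2 + v3 *s ?a3 + v4 *s y" by blast
  then have "v1 *s axis 1 1 + v2 *s axis 2 1 + v3 *s axis 3 1 = (0::complex^3)"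
    using Ae[of v1 v2 v3 v4] c by simp
  then have "v1 = 0" "v2 = 0" "v3 = 0" using axis3_indep by blast+
  then have cy: "c = v4 *s y" using cv by simp
  then have "v4 \<noteq> 0" using c by auto
  then have "y = (1/v4) *s c" using cy by (simp add: vec.scale_scale)
  then show ?thesis by blast
qed

lemma mv_axis: "((N::complex^'n^'m) *v axis j 1) $ i = N $ i $ j"
  by (simp add: matrix_vector_mult_def axis_def if_distrib if_distribR cong: if_cong)

lemma neg_mv: "(- (N::complex^'n^'m)) *v y = - (N *v y)"
  by (simp add: matrix_vector_mult_def vec_eq_iff sum_negf)

lemma skew_props:
  fixes N :: "complex^4^4"
  assumes sk: "transpose N = - N"
  shows "bdot x (N *v x) = 0" and "bdot y (N *v x) = - bdot x (N *v y)"
proof -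
  have "bdot y (N *v x) = bdot (transpose N *v y) x" by (rule bdot_mat)
  also have "\<dots> = - bdot x (N *v y)" using sk by (simp add: neg_mv bdot_comm del: transpose_matrix_vector)
  finally show "bdot y (N *v x) = - bdot x (N *v y)" .
  have "bdot x (N *v x) = bdot (transpose N *v x) x" by (rule bdot_mat)
  also have "\<dots> = - bdot x (N *v x)" using sk by (simp add: neg_mv bdot_comm del: transpose_matrix_vector)
  finally show "bdot x (N *v x) = 0" by simp
qed

lemma skew_kill:
  fixes N :: "complex^4^4"
  assumes sk: "transpose N = - N" and "N *v c = 0"
  shows "bdot c (N *v z) = 0"
  using skew_props(2)[OF sk, of c z] assms(2) by simp

lemma skew_expand:
  fixes N :: "complex^4^4"
  assumes sk: "transpose N = - N" and n1: "N *v c1 = 0" and n2: "N *v c2 = 0"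
  shows "bdot (a1 *s x + a2 *s y + a3 *s c1 + a4 *s c2) (N *v (b1 *s x + b2 *s y + b3 *s c1 + b4 *s c2))
        = (a1 * b2 - a2 * b1) * bdot x (N *v y)"
proof -
  note k = skew_kill[OF sk n1] skew_kill[OF sk n2] skew_props[OF sk]
  let ?u = "a1 *s x + a2 *s y + a3 *s c1 + a4 *s c2"
  have 1: "N *v (b1 *s x + b2 *s y + b3 *s c1 + b4 *s c2) = b1 *s (N *v x) + b2 *s (N *v y)"
    by (simp add: matrix_vector_right_distrib mv_scale n1 n2)
  show ?thesis unfolding 1
    by (simp add: k(1,2) k(3)[of x] k(3)[of y] k(4)[of y x] ring_distribs)
qed

lemma skew_unique:
  fixes N N' :: "complex^4^4" and c1 c2 :: "complex^4"
  assumes ind: "\<And>a b. a *s c1 + b *s c2 = 0 \<Longrightarrow> a = 0 \<and> b = 0"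
    and sk: "transpose N = - N" and n1: "N *v c1 = 0" and n2: "N *v c2 = 0"
    and sk': "transpose N' = - N'" and n1': "N' *v c1 = 0" and n2': "N' *v c2 = 0"
    and nz: "N' \<noteq> 0"
  shows "\<exists>t. N = mat t ** N'"
proof -
  obtain i j where ij: "N' $ i $ j \<noteq> 0" using nz by (metis vec_eq_iff zero_index)
  define x :: "complex^4" where "x = axis i 1"
  define y :: "complex^4" where "y = axis j 1"
  define d where "d = bdot x (N' *v y)"
  have d: "d \<noteq> 0" using ij by (simp add: d_def x_def y_def mv_axis)
  note k' = skew_kill[OF sk' n1'] skew_kill[OF sk' n2'] skew_props[OF sk']
  have sp: "\<exists>v1 v2 v3 v4. u = v1 *s x + v2 *s y + v3 *s c1 + v4 *s c2" for u
  proof (rule span4)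
    fix v1 v2 v3 v4 assume h: "v1 *s x + v2 *s y + v3 *s c1 + v4 *s c2 = 0"
    have "bdot (v1 *s x + v2 *s y + v3 *s c1 + v4 *s c2) (N' *v (0 *s x + 1 *s y + 0 *s c1 + 0 *s c2)) = v1 * d"
      unfolding skew_expand[OF sk' n1' n2'] d_def by simp
    then have a: "v1 = 0" using h d by simp
    have "bdot (1 *s x + 0 *s y + 0 *s c1 + 0 *s c2) (N' *v (v1 *s x + v2 *s y + v3 *s c1 + v4 *s c2)) = v2 * d"
      unfolding skew_expand[OF sk' n1' n2'] d_def by simp
    then have b: "v2 = 0" using h d by simp
    then have "v3 *s c1 + v4 *s c2 = 0" using a h by simp
    then show "v1 = 0 \<and> v2 = 0 \<and> v3 = 0 \<and> v4 = 0" using a b ind by blast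
  qed
  define t where "t = bdot x (N *v y) / d"
  have "N = mat t ** N'"
  proof (rule matrix_ext_bdot)
    fix u w :: "complex^4"
    obtain a1 a2 a3 a4 where u: "u = a1 *s x + a2 *s y + a3 *s c1 + a4 *s c2" using sp by blast
    obtain b1 b2 b3 b4 where w: "w = b1 *s x + b2 *s y + b3 *s c1 + b4 *s c2" using sp by blast
    show "bdot u (N *v w) = bdot u ((mat t ** N') *v w)"
      unfolding mat_mv bdot_scale_right u w skew_expand[OF sk n1 n2] skew_expand[OF sk' n1' n2']
      using d by (simp add: t_def d_def)
  qed
  then show ?thesis by blast
qed


definition Phi :: "complex^4^3 \<Rightarrow> complex^4^3 \<Rightarrow> complex^3^3 \<Rightarrow> complex^4^4" where
  "Phi A1 A2 M = transpose A2 ** M ** A1 + transpose A1 ** transpose M ** A2"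

lemma transpose_N: "transpose (transpose A2 ** M ** A1) = transpose A1 ** transpose M ** (A2::complex^4^3)"
  by (simp add: matrix_transpose_mul matrix_mul_assoc)

lemma Phi_add: "Phi A1 A2 (X + Y) = Phi A1 A2 X + Phi A1 A2 Y"
  by (simp add: Phi_def matrix_add_ldistrib matrix_add_rdistrib' transpose_add algebra_simps)

lemma Phi_mat: "Phi A1 A2 (mat a ** X) = mat a ** Phi A1 A2 X"
  by (simp add: Phi_def transpose_mat_mult mat_assoc_left mat_assoc_right matrix_add_ldistrib)

lemma Phi_lin: "Phi A1 A2 (mat a ** F + mat b ** M) = mat a ** Phi A1 A2 F + mat b ** Phi A1 A2 M"
  by (simp add: Phi_add Phi_mat)

lemma mat_zero_right: "mat a ** (0::complex^'n^'m) = 0"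
  by (simp add: vec_eq_iff)

lemma Phi_F:
  assumes "\<forall>p. bdot (A2 *v p) (F *v (A1 *v p)) = 0"
  shows "Phi A1 A2 F = 0"
proof -
  let ?N = "transpose A2 ** F ** A1"
  have q: "bdot p (?N *v p) = 0" for p
    using assms bdot_mat[of p "transpose A2" "F *v (A1 *v p)"]
    by (simp add: matrix_vector_mul_assoc[symmetric] del: transpose_matrix_vector)
  have "bdot x ((?N + transpose ?N) *v y) = bdot x (0 *v y)" for x y
  proof -
    have "bdot (x + y) (?N *v (x + y)) = 0" by (rule q)
    then have "bdot x (?N *v y) + bdot y (?N *v x) = 0"
      using q[of x] q[of y] by (simp add: matrix_vector_right_distrib) (metis add.commute)
    moreover have "bdot x (transpose ?N *v y) = bdot y (?N *v x)"
      by (simp add: bdot_mat[of x "transpose ?N"] bdot_comm del: transpose_matrix_vector)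
    ultimately show ?thesis by (simp add: matrix_vector_mult_add_rdistrib)
  qed
  then have "?N + transpose ?N = 0" by (rule matrix_ext_bdot)
  then show ?thesis by (simp add: Phi_def transpose_N)
qed

lemma rank_nz: "rank (F::complex^3^3) = 2 \<Longrightarrow> F \<noteq> 0"
proof
  assume "rank F = 2" "F = 0"
  then have "rows F = {0}" by (auto simp: rows_def row_def vec_eq_iff)
  then show False using \<open>rank F = 2\<close> by (simp add: row_rank_def_gen)
qed


lemma Phi_kernel:
  fixes A1 A2 :: "complex^4^3" and c1 c2 :: "complex^4" and F M :: "complex^3^3"
  assumes R2: "A2 ** R2 = mat 1" and R1: "A1 ** R1 = mat 1"
    and c1: "A1 *v c1 = 0" and c2: "c2 \<noteq> 0" "A2 *v c2 = 0"
    and nc: "\<forall>t::complex. c1 \<noteq> t *s c2"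
    and Fnz: "F \<noteq> 0" and PF: "Phi A1 A2 F = 0" and PM: "Phi A1 A2 M = 0"
  shows "\<exists>t. M = mat t ** F"
proof -
  have bk: "X = transpose R2 ** (transpose A2 ** X ** A1) ** R1" for X
  proof -
    have e: "transpose R2 ** transpose A2 = mat 1" using R2 by (metis matrix_transpose_mul transpose_mat)
    have "transpose R2 ** (transpose A2 ** X ** A1) ** R1 = (transpose R2 ** transpose A2) ** X ** (A1 ** R1)"
      by (simp add: matrix_mul_assoc)
    then show ?thesis using R1 e by simp
  qed
  have ind: "a = 0 \<and> b = 0" if h: "a *s c1 + b *s c2 = 0" for a b
  proof (cases "a = 0")
    case True then show ?thesis using h c2 by (simp add: vec.scale_eq_0_iff)
  next
    case False
    have "a *s c1 = - (b *s c2)" using h by (simp add: eq_neg_iff_add_eq_0)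
    then have "(1/a) *s (a *s c1) = (1/a) *s (- (b *s c2))" by simp
    then have "c1 = (- b / a) *s c2" using False by (simp add: vec.scale_scale vec_eq_iff)
    then show ?thesis using nc by blast
  qed
  have props: "transpose (transpose A2 ** X ** A1) = - (transpose A2 ** X ** A1)"
      "(transpose A2 ** X ** A1) *v c1 = 0" "(transpose A2 ** X ** A1) *v c2 = 0"
    if "Phi A1 A2 X = 0" for X
  proof -
    let ?N = "transpose A2 ** X ** A1"
    have "?N + transpose ?N = 0" using that unfolding Phi_def transpose_N .
    then have sk: "transpose ?N = - ?N" by (metis add.commute eq_neg_iff_add_eq_0)
    have n1: "?N *v c1 = 0" using c1 by (simp add: matrix_vector_mul_assoc[symmetric])
    have "transpose ?N *v c2 = 0" unfolding transpose_N using c2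
      by (simp add: matrix_vector_mul_assoc[symmetric] del: transpose_matrix_vector)
    then have "?N *v c2 = 0" using sk by (simp add: neg_mv del: transpose_matrix_vector)
    then show "transpose ?N = - ?N" "?N *v c1 = 0" "?N *v c2 = 0" using sk n1 by blast+
  qed
  have NFnz: "transpose A2 ** F ** A1 \<noteq> 0"
  proof
    assume "transpose A2 ** F ** A1 = 0"
    then have "F = 0" using bk[of F] by (metis times0_left times0_right)
    then show False using Fnz by simp
  qed
  obtain t where t: "transpose A2 ** M ** A1 = mat t ** (transpose A2 ** F ** A1)"
    using skew_unique[OF ind props[OF PM] props[OF PF] NFnz] by blast
  have "M = transpose R2 ** (transpose A2 ** M ** A1) ** R1" by (rule bk)
  also have "\<dots> = transpose R2 ** (mat t ** (transpose A2 ** F ** A1)) ** R1"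
    using t by simp
  also have "\<dots> = mat t ** (transpose R2 ** (transpose A2 ** F ** A1) ** R1)"
    by (simp add: mat_assoc_left mat_assoc_right)
  also have "\<dots> = mat t ** F"
    by (simp only: bk[of F, symmetric])
  finally show ?thesis by blast
qed


definition outer :: "complex^'n \<Rightarrow> complex^'n \<Rightarrow> complex^'n^'n" where
  "outer a b = (\<chi> i j. a$i * b$j)"

lemma outer_mv: "outer a b *v c = bdot b c *s a"
  by (simp add: outer_def matrix_vector_mult_def bdot_def vec_eq_iff sum_distrib_left mult_ac)

lemma outer_transpose: "transpose (outer a b) = outer b a"
  by (simp add: outer_def transpose_def vec_eq_iff mult.commute)

lemma bdot_axis_gen: "bdot (axis k z) v = z * v $ k"
  by (simp add: bdot_def axis_def if_distrib if_distribR cong: if_cong)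

lemma dual_vec:
  fixes A :: "complex^4^3"
  assumes "A *v c \<noteq> 0"
  shows "\<exists>g. bdot g c = 1 \<and> (\<forall>d. A *v d = 0 \<longrightarrow> bdot g d = 0)"
proof -
  obtain k where k: "(A *v c) $ k \<noteq> 0" using assms by (metis vec_eq_iff zero_index)
  define g where "g = transpose A *v axis k (1 / (A *v c) $ k)"
  have "bdot g d = (1 / (A *v c) $ k) * (A *v d) $ k" for d
    unfolding g_def using bdot_mat[of "axis k (1 / (A *v c) $ k)" A d]
    by (simp add: bdot_axis_gen del: transpose_matrix_vector)
  then show ?thesis using k by (intro exI[of _ g]) simp
qed

lemma skew_construct:
  fixes S :: "complex^4^4" and c1 c2 g1 g2 :: "complex^4"
  assumes S: "transpose S = S" "qf S c1 = 0" "qf S c2 = 0"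
    and g: "bdot g1 c1 = 1" "bdot g1 c2 = 0" "bdot g2 c1 = 0" "bdot g2 c2 = 1"
  shows "\<exists>B. B *v c1 = 0 \<and> transpose B *v c2 = 0 \<and> B + transpose B = S"
proof -
  define u where "u = (- 1/2) *s (S *v c1)"
  define w where "w = (1/2) *s (S *v c2)"
  define \<alpha> where "\<alpha> = - bdot w c1"
  define X where "X = outer u g1 + outer w g2 + outer (\<alpha> *s g1) g2"
  define K where "K = X - transpose X"
  define B where "B = mat (1/2) ** S + K"
  have symS: "bdot (S *v x) y = bdot x (S *v y)" for x y
    using bdot_mat[of x S y] S(1) by (simp add: bdot_comm del: transpose_matrix_vector)
  have uc1: "bdot u c1 = 0" using S(2) by (simp add: u_def qf_def bdot_comm)
  have wc2: "bdot w c2 = 0" using S(3) by (simp add: w_def qf_def bdot_comm)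
  have uc2: "bdot u c2 = \<alpha>" by (simp add: u_def w_def \<alpha>_def) (metis symS bdot_comm)
  have tXt: "transpose X = outer g1 u + outer g2 w + outer g2 (\<alpha> *s g1)"
    by (simp add: X_def transpose_add outer_transpose)
  have tK: "transpose K = - K"
    by (simp add: K_def transpose_def vec_eq_iff)
  have X1: "X *v c1 = u"
    by (simp add: X_def matrix_vector_mult_add_rdistrib outer_mv g)
  have Xt1: "transpose X *v c1 = 0"
    unfolding tXt by (simp add: matrix_vector_mult_add_rdistrib outer_mv g uc1 \<alpha>_def del: transpose_matrix_vector)
  have X2: "X *v c2 = w + \<alpha> *s g1"
    by (simp add: X_def matrix_vector_mult_add_rdistrib outer_mv g)
  have Xt2: "transpose X *v c2 = \<alpha> *s g1"
    unfolding tXt by (simp add: matrix_vector_mult_add_rdistrib outer_mv g wc2 uc2 del: transpose_matrix_vector)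
  have Kc1: "K *v c1 = u"
    unfolding K_def using X1 Xt1 by (simp add: matrix_vector_mult_diff_rdistrib del: transpose_matrix_vector)
  have Kc2: "K *v c2 = w"
    unfolding K_def using X2 Xt2 by (simp add: matrix_vector_mult_diff_rdistrib del: transpose_matrix_vector)
  have "B *v c1 = 0"
    by (simp add: B_def matrix_vector_mult_add_rdistrib mat_mv Kc1 u_def)
  moreover have "transpose B *v c2 = 0"
    by (simp add: B_def transpose_add transpose_mat_mult S(1) tK matrix_vector_mult_add_rdistrib matrix_vector_mult_diff_rdistrib mat_mv neg_mv Kc2 w_def del: transpose_matrix_vector)
  moreover have "B + transpose B = S"
    by (simp add: B_def transpose_add transpose_mat_mult S(1) tK vec_eq_iff)
  ultimately show ?thesis by blast
qed


lemma absorb: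
  fixes A :: "complex^4^3" and B :: "complex^4^4"
  assumes R: "A ** R = mat 1" and c: "c \<noteq> 0" "A *v c = 0" and Bc: "B *v c = 0"
  shows "B ** (R ** A) = B"
proof -
  have "B *v (R *v (A *v y)) = B *v y" for y
  proof -
    have "A *v (y - R *v (A *v y)) = 0"
      using R by (simp add: matrix_vector_mult_diff_distrib matrix_vector_mul_assoc matrix_mul_assoc)
    then obtain s where "y - R *v (A *v y) = s *s c" using ker_line[OF R c] by blast
    then have "B *v (y - R *v (A *v y)) = 0" using Bc by (simp add: mv_scale)
    then show ?thesis by (simp add: matrix_vector_mult_diff_distrib)
  qed
  then show ?thesis by (simp add: matrix_eq matrix_vector_mul_assoc)
qed

lemma Phi_surj:
  fixes A1 A2 :: "complex^4^3" and c1 c2 :: "complex^4" and S :: "complex^4^4"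
  assumes R1: "A1 ** R1 = mat 1" and R2: "A2 ** R2 = mat 1"
    and c1: "c1 \<noteq> 0" "A1 *v c1 = 0" and c2: "c2 \<noteq> 0" "A2 *v c2 = 0"
    and nc: "\<forall>t::complex. c1 \<noteq> t *s c2"
    and S: "transpose S = S" "qf S c1 = 0" "qf S c2 = 0"
  shows "\<exists>M. Phi A1 A2 M = S"
proof -
  have "A2 *v c1 \<noteq> 0"
  proof
    assume "A2 *v c1 = 0"
    then obtain s where "c1 = s *s c2" using ker_line[OF R2 c2] by blast
    then show False using nc by blast
  qed
  then obtain g1 where g1: "bdot g1 c1 = 1" "bdot g1 c2 = 0" using dual_vec c2(2) by blast
  have "A1 *v c2 \<noteq> 0"
  proof
    assume "A1 *v c2 = 0"
    then obtain s where s: "c2 = s *s c1" using ker_line[OF R1 c1] by blast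
    then have "s \<noteq> 0" using c2 by auto
    then have "c1 = (1/s) *s c2" using s by (simp add: vec.scale_scale)
    then show False using nc by blast
  qed
  then obtain g2 where g2: "bdot g2 c2 = 1" "bdot g2 c1 = 0" using dual_vec c1(2) by blast
  obtain B where B: "B *v c1 = 0" "transpose B *v c2 = 0" "B + transpose B = S"
    using skew_construct[OF S g1 g2(2) g2(1)] by blast
  have B1: "B ** (R1 ** A1) = B" by (rule absorb[OF R1 c1 B(1)])
  have B2: "transpose B ** (R2 ** A2) = transpose B" by (rule absorb[OF R2 c2 B(2)])
  then have B2': "transpose A2 ** transpose R2 ** B = B"
    by (metis matrix_transpose_mul transpose_transpose matrix_mul_assoc)
  define M where "M = transpose R2 ** B ** R1"
  have N: "transpose A2 ** M ** A1 = B"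
  proof -
    have "transpose A2 ** M ** A1 = (transpose A2 ** transpose R2 ** B) ** (R1 ** A1)"
      by (simp add: M_def matrix_mul_assoc)
    then show ?thesis using B1 B2' by simp
  qed
  have "Phi A1 A2 M = S"
    unfolding Phi_def transpose_N[symmetric] N by (rule B(3))
  then show ?thesis by blast
qed


lemma qp_self: "S \<in> qpoint S"
  unfolding qpoint_def by (intro CollectI exI[of _ 1]) simp

lemma qp_scale:
  assumes "b \<noteq> 0" shows "qpoint (mat b ** S) = qpoint S"
proof
  show "qpoint (mat b ** S) \<subseteq> qpoint S"
    unfolding qpoint_def by (auto simp: mat_assoc_left[symmetric] mat_mult_mat)
  show "qpoint S \<subseteq> qpoint (mat b ** S)"
  proof
    fix X assume "X \<in> qpoint S"
    then obtain c where "X = mat c ** S" unfolding qpoint_def by blast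
    then have "X = mat (c / b) ** (mat b ** S)" using assms
      by (simp add: mat_assoc_left[symmetric] mat_mult_mat)
    then show "X \<in> qpoint (mat b ** S)" unfolding qpoint_def by blast
  qed
qed

lemma minus_as_mat: "X - Y = X + mat (-1) ** (Y::complex^'n^'m)"
  by (simp add: vec_eq_iff)

lemma Phi_diff: "Phi A1 A2 (X - Y) = Phi A1 A2 X - Phi A1 A2 Y"
  by (simp add: minus_as_mat Phi_add Phi_mat)

lemma pline_sub:
  assumes "M1 = mat t ** F + mat b ** M2"
  shows "pline F M1 \<subseteq> pline F M2"
proof
  fix X assume "X \<in> pline F M1"
  then obtain a c where X: "X = mat a ** F + mat c ** M1" unfolding pline_def by blast
  have "X = mat (a + c * t) ** F + mat (c * b) ** M2"
    unfolding X assms by (simp add: vec_eq_iff algebra_simps)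
  then show "X \<in> pline F M2" unfolding pline_def by blast
qed

lemma self_in_pline: "M \<in> pline F M"
  unfolding pline_def by (intro CollectI exI[of _ 0] exI[of _ 1]) (simp add: vec_eq_iff)

theorem mainTheorem10:
  fixes A1 A2 :: "complex^4^3" and c1 c2 :: "complex^4" and F :: "complex^3^3"
  assumes "rank A1 = 3" and "rank A2 = 3"
    and "c1 \<noteq> 0" and "A1 *v c1 = 0"
    and "c2 \<noteq> 0" and "A2 *v c2 = 0"
    and "\<forall>t::complex. c1 \<noteq> t *s c2"
    and "rank F = 2"
    and "\<forall>p. bdot (A2 *v p) (F *v (A1 *v p)) = 0"
  shows "\<exists>f. bij_betw f (lines_through F) (quadrics_through c1 c2) \<and>
           (\<forall>L\<in>lines_through F. \<forall>M\<in>L. (\<forall>t. M \<noteq> mat t ** F) \<longrightarrow>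
              f L = qpoint (transpose A2 ** M ** A1 + transpose A1 ** transpose M ** A2))"
proof -
  note as = assms
  obtain R1 where R1: "A1 ** R1 = mat 1" using right_inv[of A1] as(1) by auto
  obtain R2 where R2: "A2 ** R2 = mat 1" using right_inv[of A2] as(2) by auto
  have Fnz: "F \<noteq> 0" using rank_nz as(8) by blast
  have PF: "Phi A1 A2 F = 0" using Phi_F as(9) by blast
  have kern: "\<exists>t. M = mat t ** F" if "Phi A1 A2 M = 0" for M
    using Phi_kernel[OF R2 R1 as(4) as(5) as(6) as(7) Fnz PF that] .
  define nm where "nm M \<longleftrightarrow> (\<forall>t. M \<noteq> mat t ** F)" for M
  have Pnz: "Phi A1 A2 M \<noteq> 0" if "nm M" for M
    using kern that unfolding nm_def by blast
  have Pmult: "Phi A1 A2 (mat t ** F) = 0" for t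
    by (simp add: Phi_mat PF mat_zero_right)
  have Q: "qpoint (Phi A1 A2 M) = qpoint (Phi A1 A2 M0)" if hyp: "M \<in> pline F M0" "nm M" for M M0
  proof -
    obtain a b where M: "M = mat a ** F + mat b ** M0" using hyp(1) unfolding pline_def by blast
    have "b \<noteq> 0"
    proof
      assume "b = 0"
      then have "M = mat a ** F" using M by (simp add: vec_eq_iff)
      then show False using hyp(2) unfolding nm_def by blast
    qed
    have "Phi A1 A2 M = mat b ** Phi A1 A2 M0"
      using M by (simp add: Phi_lin PF mat_zero_right)
    then show ?thesis using qp_scale[OF \<open>b \<noteq> 0\<close>] by simp
  qed
  define f where "f L = qpoint (Phi A1 A2 (SOME M. M \<in> L \<and> nm M))" for L
  have prp: "f L = qpoint (Phi A1 A2 M)" if hyp: "L \<in> lines_through F" "M \<in> L" "nm M" for L M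
  proof -
    obtain M0 where L: "L = pline F M0" "nm M0" using hyp(1) unfolding lines_through_def nm_def by blast
    have "\<exists>M. M \<in> L \<and> nm M" using hyp by blast
    then have s: "(SOME M. M \<in> L \<and> nm M) \<in> L \<and> nm (SOME M. M \<in> L \<and> nm M)" by (rule someI_ex)
    show ?thesis unfolding f_def using Q[of M M0] Q[of "SOME M. M \<in> L \<and> nm M" M0] s hyp L by simp
  qed
  have Lform: "\<exists>M. L = pline F M \<and> nm M \<and> M \<in> L \<and> f L = qpoint (Phi A1 A2 M)" if hyp: "L \<in> lines_through F" for L
  proof -
    obtain M0 where L: "L = pline F M0" "nm M0" using hyp unfolding lines_through_def nm_def by blast
    then show ?thesis using prp[OF hyp, of M0] self_in_pline[of M0 F] by blast
  qed
  have PhiT: "transpose (Phi A1 A2 M) = Phi A1 A2 M" for M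
    by (simp add: Phi_def transpose_add transpose_N[symmetric] add.commute)
  have Pqf: "qf (Phi A1 A2 M) c1 = 0 \<and> qf (Phi A1 A2 M) c2 = 0" for M
  proof -
    let ?N = "transpose A2 ** M ** A1"
    have P: "Phi A1 A2 M = ?N + transpose ?N" unfolding Phi_def transpose_N ..
    have n1: "?N *v c1 = 0" using as(4) by (simp add: matrix_vector_mul_assoc[symmetric])
    have n2: "transpose ?N *v c2 = 0" unfolding transpose_N using as(6)
      by (simp add: matrix_vector_mul_assoc[symmetric] del: transpose_matrix_vector)
    have "bdot c1 (transpose ?N *v c1) = 0"
      using bdot_mat[of c1 "transpose ?N" c1] n1 by (simp add: del: transpose_matrix_vector)
    moreover have "bdot c2 (?N *v c2) = 0"
      using bdot_mat[of c2 ?N c2] n2 by (simp add: del: transpose_matrix_vector)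
    ultimately show ?thesis unfolding qf_def P using n1 n2
      by (simp add: matrix_vector_mult_add_rdistrib del: transpose_matrix_vector)
  qed
  have "bij_betw f (lines_through F) (quadrics_through c1 c2)"
  proof (rule bij_betw_imageI)
    show "inj_on f (lines_through F)"
    proof (rule inj_onI)
      fix L1 L2 assume L1: "L1 \<in> lines_through F" and L2: "L2 \<in> lines_through F" and e: "f L1 = f L2"
      obtain M1 where M1: "L1 = pline F M1" "nm M1" "f L1 = qpoint (Phi A1 A2 M1)" using Lform[OF L1] by blast
      obtain M2 where M2: "L2 = pline F M2" "nm M2" "f L2 = qpoint (Phi A1 A2 M2)" using Lform[OF L2] by blast
      have sub: "pline F X \<subseteq> pline F Y"
        if hyp: "qpoint (Phi A1 A2 X) = qpoint (Phi A1 A2 Y)" "nm X" for X Y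
      proof -
        have "Phi A1 A2 X \<in> qpoint (Phi A1 A2 Y)" using hyp(1) qp_self by metis
        then obtain b where b: "Phi A1 A2 X = mat b ** Phi A1 A2 Y" unfolding qpoint_def by blast
        have "Phi A1 A2 (X - mat b ** Y) = 0" by (simp add: Phi_diff Phi_mat b)
        then obtain t where "X - mat b ** Y = mat t ** F" using kern by blast
        then have "X = mat t ** F + mat b ** Y" by (simp add: algebra_simps)
        then show ?thesis by (rule pline_sub)
      qed
      have "qpoint (Phi A1 A2 M1) = qpoint (Phi A1 A2 M2)" using e M1 M2 by simp
      then have "pline F M1 \<subseteq> pline F M2" "pline F M2 \<subseteq> pline F M1"
        using sub M1(2) M2(2) by metis+
      then show "L1 = L2" using M1 M2 by blast
    qed
    show "f ` lines_through F = quadrics_through c1 c2"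
    proof
      show "f ` lines_through F \<subseteq> quadrics_through c1 c2"
      proof
        fix Q assume "Q \<in> f ` lines_through F"
        then obtain L where L: "L \<in> lines_through F" "Q = f L" by blast
        obtain M where M: "nm M" "f L = qpoint (Phi A1 A2 M)" using Lform[OF L(1)] by blast
        show "Q \<in> quadrics_through c1 c2" unfolding quadrics_through_def
          using L(2) M Pnz[OF M(1)] PhiT[of M] Pqf[of M] by blast
      qed
      show "quadrics_through c1 c2 \<subseteq> f ` lines_through F"
      proof
        fix Q assume "Q \<in> quadrics_through c1 c2"
        then obtain S where S: "Q = qpoint S" "S \<noteq> 0" "transpose S = S" "qf S c1 = 0" "qf S c2 = 0"
          unfolding quadrics_through_def by blast
        obtain M where M: "Phi A1 A2 M = S"
          using Phi_surj[OF R1 R2 as(3) as(4) as(5) as(6) as(7) S(3) S(4) S(5)] by blast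
        have nmM: "nm M" unfolding nm_def using M S(2) Pmult by auto
        have Lin: "pline F M \<in> lines_through F" unfolding lines_through_def using nmM nm_def by blast
        have "f (pline F M) = Q" using prp[OF Lin self_in_pline nmM] M S(1) by simp
        then show "Q \<in> f ` lines_through F" using Lin by blast
      qed
    qed
  qed
  moreover have "\<forall>L\<in>lines_through F. \<forall>M\<in>L. (\<forall>t. M \<noteq> mat t ** F) \<longrightarrow>
              f L = qpoint (transpose A2 ** M ** A1 + transpose A1 ** transpose M ** A2)"
    using prp unfolding nm_def Phi_def by blast
  ultimately show ?thesis by blast
qed
end
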